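(* Let $p>1$, let $k\ge 2$ be an integer and define \[\psi_k(x)=\sin^p(\pi x)\Big(\frac1{(k-x)^p}+\frac1{(k+x-1)^p}\Big),\qquad x\in[1/2,1].\] If $x\in(1/2,1)$ and $\psi_k'(x)<0$, then $\psi_{k+1}'(x)<0$. *)

theory Defs
  imports "HOL-Analysis.Analysis"
begin

definition psi :: "real \<Rightarrow> nat \<Rightarrow> real \<Rightarrow> real" where
  "psi p k x = (sin (pi * x)) powr p *
      (1 / (real k - x) powr p + 1 / (real k + x - 1) powr p)"

end

theory Submission
  imports Defs
begin

lemma deriv_psi:
  fixes p x :: real and k :: nat
  assumes "p > 1" and "k \<ge> 2" and "1/2 < x" and "x < 1"
  shows "deriv (psi p k) x = p * sin(pi*x) powr (p-1) *
    (pi*cos(pi*x)*((real k-x) powr -p + (real k+x-1) powr -p)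
     + sin(pi*x)*((real k-x) powr (-p-1) - (real k+x-1) powr (-p-1)))"
proof -
  have s: "sin (pi*x) > 0" using assms by (intro sin_gt_zero) auto
  have a: "real k - x > 0" "real k + x - 1 > 0" using assms by auto
  have eq: "psi p k = (\<lambda>x. sin (pi*x) powr p * ((real k - x) powr (-p) + (real k + x - 1) powr (-p)))"
    by (rule ext) (simp add: psi_def powr_minus_divide)
  have "((\<lambda>x. sin (pi*x) powr p * ((real k - x) powr (-p) + (real k + x - 1) powr (-p)))
     has_real_derivative
      (p * sin(pi*x) powr (p-1) * (cos (pi*x) * pi)) * ((real k - x) powr (-p) + (real k + x - 1) powr (-p))
      + sin (pi*x) powr p * ((-p) * (real k - x) powr (-p-1) * (-1) + (-p) * (real k + x - 1) powr (-p-1) * 1)) (at x)"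
  proof -
    have d1: "DERIV (\<lambda>x. sin(pi*x)) x :> cos(pi*x)*pi"
      by (auto intro!: derivative_eq_intros)
    have d2: "DERIV (\<lambda>x. real k - x) x :> -1"
      by (auto intro!: derivative_eq_intros)
    have d3: "DERIV (\<lambda>x. real k + x - 1) x :> 1"
      by (auto intro!: derivative_eq_intros)
    note e1 = DERIV_fun_powr[OF d1 s, of p]
    note e2 = DERIV_fun_powr[OF d2 a(1), of "-p"]
    note e3 = DERIV_fun_powr[OF d3 a(2), of "-p"]
    show ?thesis using DERIV_mult[OF e1 DERIV_add[OF e2 e3]]
      by (simp add: algebra_simps)
  qed
  hence "deriv (psi p k) x = (p * sin(pi*x) powr (p-1) * (cos (pi*x) * pi)) * ((real k - x) powr (-p) + (real k + x - 1) powr (-p))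
      + sin (pi*x) powr p * ((-p) * (real k - x) powr (-p-1) * (-1) + (-p) * (real k + x - 1) powr (-p-1) * 1)"
    unfolding eq by (rule DERIV_imp_deriv)
  also have "sin (pi*x) powr p = sin (pi*x) * sin(pi*x) powr (p-1)"
    using s by (simp add: powr_mult_base)
  finally show ?thesis by (simp add: algebra_simps)
qed


lemma aux_frac:
  fixes X y z w :: real
  assumes "X > 0" "y > 0" "w > 0"
  shows "(X/y - X/y*z)/(X + X*w) = (1-z)/(1+w)/y"
proof -
  have "(X/y - X/y*z)/(X + X*w) = (X*((1-z)/y)) / (X*(1+w))" using assms by (simp add: field_simps)
  also have "\<dots> = ((1-z)/y)/(1+w)" using assms by (subst mult_divide_mult_cancel_left) auto
  finally show ?thesis by simp
qed

lemma ratio_eq: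
  fixes a b p :: real
  assumes "0 < a" "0 < b"
  shows "(a powr (-p-1) - b powr (-p-1)) / (a powr -p + b powr -p)
       = (1 - (b/a) powr (-p-1)) / (1 + (b/a) powr -p) / a"
proof -
  have b: "b = a * (b/a)" using assms by simp
  have m1: "b powr (-p-1) = a powr (-p-1) * (b/a) powr (-p-1)"
    using powr_mult[of a "b/a" "-p-1"] assms by simp
  have m2: "b powr (-p) = a powr (-p) * (b/a) powr (-p)"
    using powr_mult[of a "b/a" "-p"] assms by simp
  have m3: "a powr (-p-1) = a powr (-p) / a"
    using assms by (simp add: powr_diff)
  have pos: "a powr -p > 0" "(b/a) powr -p > 0" using assms by auto
  show ?thesis unfolding m1 m2 m3 using aux_frac[OF pos(1) assms(1) pos(2)] by simp
qed

lemma g_mono: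
  fixes p t t' :: real
  assumes "p > 0" "1 < t'" "t' < t"
  shows "0 < (1 - t' powr (-p-1)) / (1 + t' powr -p)"
    and "(1 - t' powr (-p-1)) / (1 + t' powr -p) \<le> (1 - t powr (-p-1)) / (1 + t powr -p)"
proof -
  have u: "t' powr (-p-1) < 1" using assms
    using powr_less_mono2_neg[of "-p-1" 1 t'] by simp
  have u2: "t powr (-p-1) < t' powr (-p-1)" using assms
    by (intro powr_less_mono2_neg) auto
  have v2: "t powr (-p) < t' powr (-p)" using assms
    by (intro powr_less_mono2_neg) auto
  have v: "t powr (-p) > 0" by (simp add: powr_gt_zero) (use assms in auto)
  have w: "1 + t' powr -p > 0" using powr_ge_zero[of t' "-p"] by linarith
  show "0 < (1 - t' powr (-p-1)) / (1 + t' powr -p)" using u w by (intro divide_pos_pos) auto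
  have w2: "1 + t powr -p > 0" using powr_ge_zero[of t "-p"] by linarith
  show "(1 - t' powr (-p-1)) / (1 + t' powr -p) \<le> (1 - t powr (-p-1)) / (1 + t powr -p)"
    using u u2 w2 v2 by (intro frac_le) auto
qed

lemma ratio_dec:
  fixes a b p :: real
  assumes "p > 0" "0 < a" "a < b"
  shows "((a+1) powr (-p-1) - (b+1) powr (-p-1)) / ((a+1) powr -p + (b+1) powr -p)
       < (a powr (-p-1) - b powr (-p-1)) / (a powr -p + b powr -p)"
proof -
  have t: "1 < (b+1)/(a+1)" "(b+1)/(a+1) < b/a" using assms by (auto simp: field_simps)
  note g = g_mono[OF assms(1) t]
  have "(1 - ((b+1)/(a+1)) powr (-p-1)) / (1 + ((b+1)/(a+1)) powr -p) / (a+1)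
      < (1 - ((b+1)/(a+1)) powr (-p-1)) / (1 + ((b+1)/(a+1)) powr -p) / a"
    using g(1) assms by (intro divide_strict_left_mono) auto
  also have "\<dots> \<le> (1 - (b/a) powr (-p-1)) / (1 + (b/a) powr -p) / a"
    using g(2) assms by (intro divide_right_mono) auto
  finally show ?thesis using assms by (simp add: ratio_eq)
qed

theorem lemma2:
  fixes p x :: real and k :: nat
  assumes "p > 1" and "k \<ge> 2"
    and "1/2 < x" and "x < 1"
    and "deriv (psi p k) x < 0"
  shows "deriv (psi p (k + 1)) x < 0"
proof -
  define s where "s = sin (pi*x)"
  define c where "c = - pi * cos (pi*x)"
  define a where "a = real k - x"
  define b where "b = real k + x - 1"
  have s: "s > 0" unfolding s_def using assms by (intro sin_gt_zero) auto
  have cpos: "c > 0"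
  proof -
    have "cos (pi*x) < 0" using assms by (intro cos_lt_zero_pi) auto
    thus ?thesis unfolding c_def by (simp add: mult_pos_neg)
  qed
  have ab: "0 < a" "a < b" using assms unfolding a_def b_def by auto
  have sp: "p * s powr (p-1) > 0" using s assms by auto
  have D: "\<And>k. k \<ge> 2 \<Longrightarrow> deriv (psi p k) x = p * s powr (p-1) *
    (- c*((real k-x) powr -p + (real k+x-1) powr -p)
     + s*((real k-x) powr (-p-1) - (real k+x-1) powr (-p-1)))"
    unfolding s_def c_def using assms by (subst deriv_psi) auto
  have "- c*(a powr -p + b powr -p) + s*(a powr (-p-1) - b powr (-p-1)) < 0"
    using assms(5) D[OF assms(2)] sp assms(1) unfolding a_def b_def
    by (simp add: mult_less_0_iff)
  hence h1: "s * ((a powr (-p-1) - b powr (-p-1)) / (a powr -p + b powr -p)) < c"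
    using ab by (simp add: field_simps add_pos_pos)
  have "s * (((a+1) powr (-p-1) - (b+1) powr (-p-1)) / ((a+1) powr -p + (b+1) powr -p))
       < s * ((a powr (-p-1) - b powr (-p-1)) / (a powr -p + b powr -p))"
    using ratio_dec[of p a b] ab assms s by (intro mult_strict_left_mono) auto
  hence "s * (((a+1) powr (-p-1) - (b+1) powr (-p-1)) / ((a+1) powr -p + (b+1) powr -p)) < c"
    using h1 by linarith
  hence "- c*((a+1) powr -p + (b+1) powr -p) + s*((a+1) powr (-p-1) - (b+1) powr (-p-1)) < 0"
    using ab by (simp add: field_simps add_pos_pos)
  moreover have "a + 1 = real (k+1) - x" "b + 1 = real (k+1) + x - 1"
    unfolding a_def b_def by auto
  ultimately show ?thesis using D[of "k+1"] assms(2) sp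
    by (simp add: mult_pos_neg)
qed

end
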